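(* Let $h=u+v+u^{-1}+v^{-1}+u^{-1}v^{-1}\in A=\mathbb C\langle u^{\pm1},v^{\pm1}\rangle$ and consider the derivation $\frac{d}{dt}x=\{h,x\}_K$ of $A$ (the Kontsevich flow). For every integer $k>0$, $\pi(h^k)$ is an integral of this flow: $\frac{d}{dt}h^k=\{h,h^k\}_K\in[A,A]$, i.e. $\pi\big(\tfrac{d}{dt}h^k\big)=0$.
   Context: $A$ is the group algebra over $\mathbb C$ of the free group on $u,v$; $[A,A]$ is the linear span of all $ab-ba$; $\pi:A\to A/[A,A]$ is the projection. $\mu(a\otimes b)=ab$; $A\otimes A$ has componentwise multiplication. The double bracket $\llbracket\cdot\rrbracket_K:A\otimes A\to A\otimes A$ is the linear map with $\llbracket u\otimes v\rrbracket_K=-vu\otimes1$, $\llbracket v\otimes u\rrbracket_K=uv\otimes1$, $\llbracket u\otimes u\rrbracket_K=\llbracket v\otimes v\rrbracket_K=0$, extended (also to inverse letters) by the Leibniz rules $\llbracket a\otimes bc\rrbracket_K=\llbracket a\otimes b\rrbracket_K(1\otimes c)+(b\otimes1)\llbracket a\otimes c\rrbracket_K$ and $\llbracket ab\otimes c\rrbracket_K=\llbracket a\otimes c\rrbracket_K(b\otimes1)+(1\otimes a)\llbracket b\otimes c\rrbracket_K$. The bracket is $\{a,b\}_K=\mu(\llbracket a\otimes b\rrbracket_K)$; it satisfies the Leibniz rule in the second argument, so $\{h,\cdot\}_K$ is a derivation of $A$. *)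

theory Defs
  imports Complex_Main
begin

text \<open>Free group F on two generators u, v, realised by freely reduced words.
  A letter is a pair (g, e): g = False means u, g = True means v;
  e = True means exponent +1, e = False means exponent -1.\<close>

type_synonym letter = "bool \<times> bool"
type_synonym word = "letter list"

definition inv_letter :: "letter \<Rightarrow> letter" where
  "inv_letter l = (fst l, \<not> snd l)"

fun red :: "word \<Rightarrow> word" where
  "red [] = []"
| "red (x # xs) = (case red xs of [] \<Rightarrow> [x]
                    | y # ys \<Rightarrow> (if y = inv_letter x then ys else x # y # ys))"

text \<open>The group algebra A = C[F]: finitely supported complex functions on reduced words.\<close>
definition algA :: "(word \<Rightarrow> complex) set" where
  "algA = {f. finite {w. f w \<noteq> 0} \<and> (\<forall>w. f w \<noteq> 0 \<longrightarrow> red w = w)}"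

definition addA :: "(word \<Rightarrow> complex) \<Rightarrow> (word \<Rightarrow> complex) \<Rightarrow> (word \<Rightarrow> complex)" where
  "addA f g = (\<lambda>w. f w + g w)"

definition smulA :: "complex \<Rightarrow> (word \<Rightarrow> complex) \<Rightarrow> (word \<Rightarrow> complex)" where
  "smulA c f = (\<lambda>w. c * f w)"

definition zeroA :: "word \<Rightarrow> complex" where
  "zeroA = (\<lambda>w. 0)"

definition gen :: "word \<Rightarrow> (word \<Rightarrow> complex)" where
  "gen w = (\<lambda>x. if x = red w then 1 else 0)"

definition oneA :: "word \<Rightarrow> complex" where
  "oneA = gen []"

definition mulA :: "(word \<Rightarrow> complex) \<Rightarrow> (word \<Rightarrow> complex) \<Rightarrow> (word \<Rightarrow> complex)" where
  "mulA f g = (\<lambda>w. \<Sum>p\<in>{(x, y). f x \<noteq> 0 \<and> g y \<noteq> 0 \<and> red (x @ y) = w}. f (fst p) * g (snd p))"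

fun powA :: "(word \<Rightarrow> complex) \<Rightarrow> nat \<Rightarrow> (word \<Rightarrow> complex)" where
  "powA f 0 = oneA"
| "powA f (Suc n) = mulA f (powA f n)"

text \<open>A \<otimes> A = C[F \<times> F] with componentwise multiplication.\<close>
definition algT :: "(word \<times> word \<Rightarrow> complex) set" where
  "algT = {X. finite {p. X p \<noteq> 0} \<and> (\<forall>x y. X (x, y) \<noteq> 0 \<longrightarrow> red x = x \<and> red y = y)}"

definition addT :: "(word \<times> word \<Rightarrow> complex) \<Rightarrow> (word \<times> word \<Rightarrow> complex) \<Rightarrow> (word \<times> word \<Rightarrow> complex)" where
  "addT X Y = (\<lambda>p. X p + Y p)"

definition smulT :: "complex \<Rightarrow> (word \<times> word \<Rightarrow> complex) \<Rightarrow> (word \<times> word \<Rightarrow> complex)" where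
  "smulT c X = (\<lambda>p. c * X p)"

definition tens :: "(word \<Rightarrow> complex) \<Rightarrow> (word \<Rightarrow> complex) \<Rightarrow> (word \<times> word \<Rightarrow> complex)" where
  "tens a b = (\<lambda>(x, y). a x * b y)"

definition mulT :: "(word \<times> word \<Rightarrow> complex) \<Rightarrow> (word \<times> word \<Rightarrow> complex) \<Rightarrow> (word \<times> word \<Rightarrow> complex)" where
  "mulT X Y = (\<lambda>(w1, w2). \<Sum>q\<in>{(p, r). X p \<noteq> 0 \<and> Y r \<noteq> 0 \<and>
        red (fst p @ fst r) = w1 \<and> red (snd p @ snd r) = w2}. X (fst q) * Y (snd q))"

definition muT :: "(word \<times> word \<Rightarrow> complex) \<Rightarrow> (word \<Rightarrow> complex)" where
  "muT X = (\<lambda>w. \<Sum>p\<in>{p. X p \<noteq> 0 \<and> red (fst p @ snd p) = w}. X p)"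

inductive_set commA :: "(word \<Rightarrow> complex) set" where
  zero: "zeroA \<in> commA"
| comm: "a \<in> algA \<Longrightarrow> b \<in> algA \<Longrightarrow> addA (mulA a b) (smulA (-1) (mulA b a)) \<in> commA"
| add: "x \<in> commA \<Longrightarrow> y \<in> commA \<Longrightarrow> addA x y \<in> commA"
| smul: "x \<in> commA \<Longrightarrow> smulA c x \<in> commA"

definition gu :: "word \<Rightarrow> complex" where "gu = gen [(False, True)]"
definition gv :: "word \<Rightarrow> complex" where "gv = gen [(True, True)]"

definition hK :: "word \<Rightarrow> complex" where
  "hK = addA (addA (addA (addA gu gv) (gen [(False, False)])) (gen [(True, False)]))
            (gen [(False, False), (True, False)])"

text \<open>K is the Kontsevich double bracket: the linear map on A \<otimes> A with the given
  values on generators and satisfying both Leibniz rules (this determines it uniquely).\<close>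
definition kontsevich_dbr :: "((word \<times> word \<Rightarrow> complex) \<Rightarrow> (word \<times> word \<Rightarrow> complex)) \<Rightarrow> bool" where
  "kontsevich_dbr K \<longleftrightarrow>
     (\<forall>X\<in>algT. K X \<in> algT) \<and>
     (\<forall>X\<in>algT. \<forall>Y\<in>algT. K (addT X Y) = addT (K X) (K Y)) \<and>
     (\<forall>c. \<forall>X\<in>algT. K (smulT c X) = smulT c (K X)) \<and>
     K (tens gu gv) = smulT (-1) (tens (mulA gv gu) oneA) \<and>
     K (tens gv gu) = tens (mulA gu gv) oneA \<and>
     K (tens gu gu) = tens zeroA zeroA \<and>
     K (tens gv gv) = tens zeroA zeroA \<and>
     (\<forall>a\<in>algA. \<forall>b\<in>algA. \<forall>c\<in>algA.
        K (tens a (mulA b c)) = addT (mulT (K (tens a b)) (tens oneA c)) (mulT (tens b oneA) (K (tens a c)))) \<and>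
     (\<forall>a\<in>algA. \<forall>b\<in>algA. \<forall>c\<in>algA.
        K (tens (mulA a b) c) = addT (mulT (K (tens a c)) (tens b oneA)) (mulT (tens oneA a) (K (tens b c))))"

definition brK :: "((word \<times> word \<Rightarrow> complex) \<Rightarrow> (word \<times> word \<Rightarrow> complex)) \<Rightarrow>
    (word \<Rightarrow> complex) \<Rightarrow> (word \<Rightarrow> complex) \<Rightarrow> (word \<Rightarrow> complex)" where
  "brK K a b = muT (K (tens a b))"

end

theory Submission
  imports Defs "HOL-Library.Poly_Mapping" "HOL-Library.Product_Plus"
begin

definition cr :: "letter \<Rightarrow> word \<Rightarrow> word" where
  "cr x z = (case z of [] \<Rightarrow> [x] | y # ys \<Rightarrow> (if y = inv_letter x then ys else x # y # ys))"

lemma red_cons: "red (x # xs) = cr x (red xs)"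
  by (simp add: cr_def)

declare red.simps(2)[simp del]
declare red_cons[simp]

lemma inv_inv[simp]: "inv_letter (inv_letter a) = a"
  by (cases a) (simp add: inv_letter_def)

fun rd :: "word \<Rightarrow> bool" where
  "rd [] = True"
| "rd [x] = True"
| "rd (x # y # ys) = (y \<noteq> inv_letter x \<and> rd (y # ys))"

lemma rd_tl: "rd (x # xs) \<Longrightarrow> rd xs"
  by (cases xs) auto

lemma rd_cr: "rd z \<Longrightarrow> rd (cr x z)"
  by (cases z) (auto simp: cr_def dest: rd_tl)

lemma rd_red: "rd (red w)"
  by (induction w) (auto simp: red_cons intro: rd_cr)

lemma cr_rd: "rd (x # z) \<Longrightarrow> cr x z = x # z"
  by (cases z) (auto simp: cr_def)

lemma red_rd: "rd w \<Longrightarrow> red w = w"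
  by (induction w rule: rd.induct) (auto simp: red_cons cr_def)

lemma red_red[simp]: "red (red w) = red w"
  using red_rd rd_red by blast

lemma red_app_right: "red (x @ y) = red (x @ red y)"
  by (induction x) (auto simp: red_cons)

lemma cr_cancel: "rd z \<Longrightarrow> cr a (cr (inv_letter a) z) = z"
proof (cases z)
  case Nil then show ?thesis by (simp add: cr_def)
next
  case (Cons c zs)
  assume r: "rd z"
  show ?thesis
  proof (cases "c = a")
    case True
    then have "cr (inv_letter a) z = zs" using Cons by (simp add: cr_def)
    moreover have "cr a zs = a # zs"
      using r Cons True by (cases zs) (auto simp: cr_def)
    ultimately show ?thesis using Cons True by simp
  next
    case False
    then have "cr (inv_letter a) z = inv_letter a # z" using Cons
      by (auto simp: cr_def inv_letter_def)
    then show ?thesis by (simp add: cr_def)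
  qed
qed

lemma red_cr_app: "rd r \<Longrightarrow> red (cr a r @ y) = cr a (red (r @ y))"
proof (cases r)
  case Nil then show ?thesis by (simp add: cr_def red_cons)
next
  case (Cons b rs)
  assume rr: "rd r"
  show ?thesis
  proof (cases "b = inv_letter a")
    case True
    then have "cr a r = rs" using Cons by (simp add: cr_def)
    moreover have "red (r @ y) = cr (inv_letter a) (red (rs @ y))"
      using Cons True by (simp add: red_cons)
    ultimately show ?thesis using cr_cancel[of "red (rs @ y)" a] rd_red
      by (metis inv_inv)
  next
    case False
    then have "cr a r = a # r" using Cons by (simp add: cr_def)
    then show ?thesis by (simp add: red_cons)
  qed
qed

lemma red_app_left: "red (x @ y) = red (red x @ y)"
proof (induction x)
  case Nil then show ?case by (simp add: red_rd[OF rd_red])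
next
  case (Cons a x)
  have "red ((a # x) @ y) = cr a (red (x @ y))" by (simp add: red_cons)
  also have "\<dots> = cr a (red (red x @ y))" using Cons by simp
  also have "\<dots> = red (cr a (red x) @ y)" using red_cr_app[OF rd_red] by simp
  finally show ?case by (simp add: red_cons)
qed

lemma red_assoc: "red (red (x @ y) @ z) = red (x @ red (y @ z))"
  by (metis append_assoc red_app_left red_app_right)

typedef fg = "{w. red w = w}" morphisms rep ab
  by (rule exI[of _ "[]"]) simp

lemma rep_red[simp]: "red (rep a) = rep a"
  using rep by auto

lemma ab_inv[simp]: "red w = w \<Longrightarrow> rep (ab w) = w"
  by (simp add: ab_inverse)

lemma ab_inj: "red x = x \<Longrightarrow> red y = y \<Longrightarrow> ab x = ab y \<longleftrightarrow> x = y"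
  by (metis ab_inv)

instantiation fg :: monoid_add
begin
definition zero_fg_def: "0 = ab []"
definition plus_fg_def: "a + b = ab (red (rep a @ rep b))"
instance
proof
  fix a b c :: fg
  show "a + b + c = a + (b + c)"
    by (simp add: plus_fg_def red_assoc)
  show "0 + a = a" by (simp add: plus_fg_def zero_fg_def rep_inverse)
  show "a + 0 = a" by (simp add: plus_fg_def zero_fg_def rep_inverse)
qed
end

lemma plus_ab: "red x = x \<Longrightarrow> red y = y \<Longrightarrow> ab x + ab y = ab (red (x @ y))"
  by (simp add: plus_fg_def)



abbreviation lookup where "lookup \<equiv> Poly_Mapping.lookup"
abbreviation keys where "keys \<equiv> Poly_Mapping.keys"
abbreviation single where "single \<equiv> Poly_Mapping.single"

definition Q :: "(fg \<Rightarrow>\<^sub>0 complex) \<Rightarrow> word \<Rightarrow> complex" where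
  "Q p = (\<lambda>w. if red w = w then lookup p (ab w) else 0)"

definition P :: "(word \<Rightarrow> complex) \<Rightarrow> fg \<Rightarrow>\<^sub>0 complex" where
  "P f = Abs_poly_mapping (\<lambda>g. f (rep g))"

lemma Q_alg: "Q p \<in> algA"
proof -
  have "{w. Q p w \<noteq> 0} \<subseteq> rep ` keys p"
  proof
    fix w assume "w \<in> {w. Q p w \<noteq> 0}"
    then have "red w = w" "lookup p (ab w) \<noteq> 0" by (auto simp: Q_def split: if_splits)
    then show "w \<in> rep ` keys p" by (metis ab_inv image_eqI in_keys_iff)
  qed
  then have "finite {w. Q p w \<noteq> 0}" by (rule finite_subset) simp
  then show ?thesis by (auto simp: algA_def Q_def split: if_splits)
qed

lemma P_lookup: "f \<in> algA \<Longrightarrow> lookup (P f) g = f (rep g)"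
proof -
  assume f: "f \<in> algA"
  have "{g. f (rep g) \<noteq> 0} \<subseteq> ab ` {w. f w \<noteq> 0}"
    by (auto intro: image_eqI[of _ ab "rep _"] simp: rep_inverse)
  moreover have "finite {w. f w \<noteq> 0}" using f by (simp add: algA_def)
  ultimately have "finite {g. f (rep g) \<noteq> 0}" using finite_subset by blast
  then show ?thesis by (simp add: P_def)
qed

lemma QP: "f \<in> algA \<Longrightarrow> Q (P f) = f"
  by (rule ext) (auto simp: Q_def P_lookup algA_def)

lemma lookup_times_set:
  fixes p q :: "'k::monoid_add \<Rightarrow>\<^sub>0 complex"
  shows "lookup (p * q) g = (\<Sum>x\<in>{(a, b). lookup p a \<noteq> 0 \<and> lookup q b \<noteq> 0 \<and> a + b = g}.
      lookup p (fst x) * lookup q (snd x))"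
proof -
  have fp: "finite {a. lookup p a \<noteq> 0}" "finite {a. lookup q a \<noteq> 0}" by auto
  have "lookup (p * q) g = (\<Sum>(a, b). lookup p a * lookup q b when g = a + b)"
    by (simp add: times_poly_mapping.rep_eq prod_fun_unfold_prod[OF fp])
  also have "\<dots> = (\<Sum>x\<in>{x. (case x of (a, b) \<Rightarrow> lookup p a * lookup q b when g = a + b) \<noteq> 0}.
        (case x of (a, b) \<Rightarrow> lookup p a * lookup q b when g = a + b))"
    by (rule Sum_any.expand_set)
  also have "\<dots> = (\<Sum>x\<in>{(a, b). lookup p a \<noteq> 0 \<and> lookup q b \<noteq> 0 \<and> a + b = g}.
      lookup p (fst x) * lookup q (snd x))"
    by (rule sum.cong) (auto simp: when_def mult_eq_0_iff split: if_splits)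
  finally show ?thesis .
qed

lemma mul_bridge: "mulA (Q p) (Q q) = Q (p * q)"
proof (rule ext)
  fix w
  show "mulA (Q p) (Q q) w = Q (p * q) w"
  proof (cases "red w = w")
    case False
    then have E: "{(x, y). Q p x \<noteq> 0 \<and> Q q y \<noteq> 0 \<and> red (x @ y) = w} = {}"
      by auto
    have "mulA (Q p) (Q q) w = 0" unfolding mulA_def by (simp only: E sum.empty)
    then show ?thesis using False unfolding Q_def[of "p * q"] by simp
  next
    case True
    have "mulA (Q p) (Q q) w = (\<Sum>x\<in>{(x, y). Q p x \<noteq> 0 \<and> Q q y \<noteq> 0 \<and> red (x @ y) = w}.
         Q p (fst x) * Q q (snd x))" by (simp add: mulA_def)
    also have "\<dots> = (\<Sum>x\<in>{(a, b). lookup p a \<noteq> 0 \<and> lookup q b \<noteq> 0 \<and> a + b = ab w}.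
      lookup p (fst x) * lookup q (snd x))"
    proof (rule sum.reindex_bij_witness[where i = "\<lambda>(a, b). (rep a, rep b)" and j = "\<lambda>(x, y). (ab x, ab y)"])
      fix x assume "x \<in> {(x, y). Q p x \<noteq> 0 \<and> Q q y \<noteq> 0 \<and> red (x @ y) = w}"
      then show "(case (case x of (x, y) \<Rightarrow> (ab x, ab y)) of (a, b) \<Rightarrow> (rep a, rep b)) = x"
        by (auto simp: Q_def split: if_splits)
    next
      fix x assume "x \<in> {(x, y). Q p x \<noteq> 0 \<and> Q q y \<noteq> 0 \<and> red (x @ y) = w}"
      then show "(case x of (x, y) \<Rightarrow> (ab x, ab y)) \<in> {(a, b). lookup p a \<noteq> 0 \<and> lookup q b \<noteq> 0 \<and> a + b = ab w}"
        by (auto simp: Q_def plus_ab split: if_splits)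
    next
      fix x assume "x \<in> {(a, b). lookup p a \<noteq> 0 \<and> lookup q b \<noteq> 0 \<and> a + b = ab w}"
      then show "(case (case x of (a, b) \<Rightarrow> (rep a, rep b)) of (x, y) \<Rightarrow> (ab x, ab y)) = x"
        by (auto simp: rep_inverse)
    next
      fix x assume x: "x \<in> {(a, b). lookup p a \<noteq> 0 \<and> lookup q b \<noteq> 0 \<and> a + b = ab w}"
      then obtain a b where ab: "x = (a, b)" "lookup p a \<noteq> 0" "lookup q b \<noteq> 0" "a + b = ab w" by auto
      then have "red (rep a @ rep b) = w" using True
        by (metis ab_inj plus_fg_def red_red)
      then show "(case x of (a, b) \<Rightarrow> (rep a, rep b)) \<in> {(x, y). Q p x \<noteq> 0 \<and> Q q y \<noteq> 0 \<and> red (x @ y) = w}"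
        using ab by (auto simp: Q_def rep_inverse)
    next
      fix x assume "x \<in> {(x, y). Q p x \<noteq> 0 \<and> Q q y \<noteq> 0 \<and> red (x @ y) = w}"
      then show "lookup p (fst (case x of (x, y) \<Rightarrow> (ab x, ab y))) * lookup q (snd (case x of (x, y) \<Rightarrow> (ab x, ab y))) =
         Q p (fst x) * Q q (snd x)"
        by (auto simp: Q_def split: if_splits)
    qed
    also have "\<dots> = Q (p * q) w" using True by (simp add: Q_def lookup_times_set)
    finally show ?thesis .
  qed
qed



definition QT :: "(fg \<times> fg \<Rightarrow>\<^sub>0 complex) \<Rightarrow> word \<times> word \<Rightarrow> complex" where
  "QT X = (\<lambda>(x, y). if red x = x \<and> red y = y then lookup X (ab x, ab y) else 0)"

definition PT :: "(word \<times> word \<Rightarrow> complex) \<Rightarrow> fg \<times> fg \<Rightarrow>\<^sub>0 complex" where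
  "PT Z = Abs_poly_mapping (\<lambda>(a, b). Z (rep a, rep b))"

lemma QT_alg: "QT X \<in> algT"
proof -
  have "{p. QT X p \<noteq> 0} \<subseteq> (\<lambda>(a, b). (rep a, rep b)) ` keys X"
  proof
    fix p assume "p \<in> {p. QT X p \<noteq> 0}"
    then obtain x y where "p = (x, y)" "red x = x" "red y = y" "lookup X (ab x, ab y) \<noteq> 0"
      by (auto simp: QT_def split: if_splits prod.splits)
    then show "p \<in> (\<lambda>(a, b). (rep a, rep b)) ` keys X"
      by (auto simp: in_keys_iff intro!: image_eqI[of _ _ "(ab x, ab y)"])
  qed
  then have "finite {p. QT X p \<noteq> 0}" by (rule finite_subset) simp
  then show ?thesis by (auto simp: algT_def QT_def split: if_splits)
qed

lemma PT_lookup: "Z \<in> algT \<Longrightarrow> lookup (PT Z) k = Z (rep (fst k), rep (snd k))"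
proof -
  assume Z: "Z \<in> algT"
  have "{k. (\<lambda>(a, b). Z (rep a, rep b)) k \<noteq> 0} \<subseteq> (\<lambda>(x, y). (ab x, ab y)) ` {p. Z p \<noteq> 0}"
  proof
    fix k assume "k \<in> {k. (\<lambda>(a, b). Z (rep a, rep b)) k \<noteq> 0}"
    then obtain a b where "k = (a, b)" "Z (rep a, rep b) \<noteq> 0" by (auto split: prod.splits)
    then show "k \<in> (\<lambda>(x, y). (ab x, ab y)) ` {p. Z p \<noteq> 0}"
      by (auto simp: rep_inverse intro!: image_eqI[of _ _ "(rep a, rep b)"])
  qed
  moreover have "finite {p. Z p \<noteq> 0}" using Z by (simp add: algT_def)
  ultimately have "finite {k. (\<lambda>(a, b). Z (rep a, rep b)) k \<noteq> 0}" using finite_subset by blast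
  then show ?thesis by (simp add: PT_def split: prod.splits)
qed

lemma QTPT: assumes Z: "Z \<in> algT" shows "QT (PT Z) = Z"
proof (rule ext, clarify)
  fix x y
  have "Z (x,y) \<noteq> 0 \<Longrightarrow> red x = x \<and> red y = y" using Z by (auto simp: algT_def)
  then show "QT (PT Z) (x,y) = Z (x,y)" using Z by (auto simp: QT_def PT_lookup)
qed

lemma mulT_bridge: "mulT (QT X) (QT Y) = QT (X * Y)"
proof (rule ext, clarify)
  fix w1 w2
  show "mulT (QT X) (QT Y) (w1, w2) = QT (X * Y) (w1, w2)"
  proof (cases "red w1 = w1 \<and> red w2 = w2")
    case False
    then have E: "{(p, r). QT X p \<noteq> 0 \<and> QT Y r \<noteq> 0 \<and>
        red (fst p @ fst r) = w1 \<and> red (snd p @ snd r) = w2} = {}"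
      by auto
    have "mulT (QT X) (QT Y) (w1, w2) = 0" unfolding mulT_def by (simp only: E sum.empty prod.case)
    then show ?thesis using False unfolding QT_def[of "X * Y"] by auto
  next
    case True
    let ?S = "{(p, r). QT X p \<noteq> 0 \<and> QT Y r \<noteq> 0 \<and>
        red (fst p @ fst r) = w1 \<and> red (snd p @ snd r) = w2}"
    let ?T = "{(a, b). lookup X a \<noteq> 0 \<and> lookup Y b \<noteq> 0 \<and> a + b = (ab w1, ab w2)}"
    have "mulT (QT X) (QT Y) (w1, w2) = (\<Sum>q\<in>?S. QT X (fst q) * QT Y (snd q))"
      by (simp add: mulT_def)
    also have "\<dots> = (\<Sum>x\<in>?T. lookup X (fst x) * lookup Y (snd x))"
    proof (rule sum.reindex_bij_witness[where i = "\<lambda>(a, b). ((rep (fst a), rep (snd a)), (rep (fst b), rep (snd b)))"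
          and j = "\<lambda>((x1, x2), (y1, y2)). ((ab x1, ab x2), (ab y1, ab y2))"], goal_cases)
      case (1 x) then show ?case by (auto simp: QT_def split: if_splits)
    next
      case (2 x) then show ?case by (auto simp: QT_def plus_ab split: if_splits)
    next
      case (3 x) then show ?case by (auto simp: rep_inverse)
    next
      case (4 x)
      then obtain a1 a2 b1 b2 where ab: "x = ((a1, a2), (b1, b2))" "lookup X (a1, a2) \<noteq> 0"
        "lookup Y (b1, b2) \<noteq> 0" "a1 + b1 = ab w1" "a2 + b2 = ab w2" by auto
      then have "red (rep a1 @ rep b1) = w1" "red (rep a2 @ rep b2) = w2" using True
        by (metis ab_inj plus_fg_def red_red)+
      then show ?case using ab by (auto simp: QT_def rep_inverse)
    next
      case (5 x) then show ?case by (auto simp: QT_def split: if_splits)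
    qed
    also have "\<dots> = QT (X * Y) (w1, w2)" using True by (simp add: QT_def lookup_times_set)
    finally show ?thesis .
  qed
qed

definition tp :: "(fg \<Rightarrow>\<^sub>0 complex) \<Rightarrow> (fg \<Rightarrow>\<^sub>0 complex) \<Rightarrow> (fg \<times> fg \<Rightarrow>\<^sub>0 complex)" where
  "tp p q = Abs_poly_mapping (\<lambda>(a, b). lookup p a * lookup q b)"

lemma lookup_tp: "lookup (tp p q) k = lookup p (fst k) * lookup q (snd k)"
proof -
  have "{k. (\<lambda>(a, b). lookup p a * lookup q b) k \<noteq> 0} \<subseteq> keys p \<times> keys q"
    by (auto simp: in_keys_iff)
  then have "finite {k. (\<lambda>(a, b). lookup p a * lookup q b) k \<noteq> 0}"
    by (rule finite_subset) simp
  then show ?thesis by (simp add: tp_def split: prod.splits)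
qed

lemma tens_bridge: "tens (Q p) (Q q) = QT (tp p q)"
  by (rule ext) (auto simp: tens_def Q_def QT_def lookup_tp)

definition mu :: "(fg \<times> fg \<Rightarrow>\<^sub>0 complex) \<Rightarrow> (fg \<Rightarrow>\<^sub>0 complex)" where
  "mu X = Abs_poly_mapping (\<lambda>g. \<Sum>k\<in>{k\<in>keys X. fst k + snd k = g}. lookup X k)"

lemma lookup_mu: "lookup (mu X) g = (\<Sum>k\<in>{k\<in>keys X. fst k + snd k = g}. lookup X k)"
proof -
  have "{g. (\<Sum>k\<in>{k\<in>keys X. fst k + snd k = g}. lookup X k) \<noteq> 0} \<subseteq> (\<lambda>k. fst k + snd k) ` keys X"
  proof
    fix g assume "g \<in> {g. (\<Sum>k\<in>{k\<in>keys X. fst k + snd k = g}. lookup X k) \<noteq> 0}"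
    then obtain k where "k \<in> keys X" "fst k + snd k = g"
      by (metis (mono_tags, lifting) empty_Collect_eq mem_Collect_eq sum.empty)
    then show "g \<in> (\<lambda>k. fst k + snd k) ` keys X" by auto
  qed
  then have "finite {g. (\<Sum>k\<in>{k\<in>keys X. fst k + snd k = g}. lookup X k) \<noteq> 0}"
    by (rule finite_subset) simp
  then show ?thesis by (simp add: mu_def)
qed

lemma muT_bridge: "muT (QT X) = Q (mu X)"
proof (rule ext)
  fix w
  show "muT (QT X) w = Q (mu X) w"
  proof (cases "red w = w")
    case False
    then have E: "{p. QT X p \<noteq> 0 \<and> red (fst p @ snd p) = w} = {}" by auto
    have "muT (QT X) w = 0" unfolding muT_def by (simp only: E sum.empty)
    then show ?thesis using False unfolding Q_def[of "mu X"] by simp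
  next
    case True
    let ?S = "{p. QT X p \<noteq> 0 \<and> red (fst p @ snd p) = w}"
    let ?T = "{k\<in>keys X. fst k + snd k = ab w}"
    have "muT (QT X) w = (\<Sum>p\<in>?S. QT X p)" by (simp add: muT_def)
    also have "\<dots> = (\<Sum>k\<in>?T. lookup X k)"
    proof (rule sum.reindex_bij_witness[where i = "\<lambda>(a, b). (rep a, rep b)" and j = "\<lambda>(x, y). (ab x, ab y)"])
      fix x assume "x \<in> ?S"
      then show "(case (case x of (x, y) \<Rightarrow> (ab x, ab y)) of (a, b) \<Rightarrow> (rep a, rep b)) = x"
        by (auto simp: QT_def split: if_splits prod.splits)
    next
      fix x assume "x \<in> ?S"
      then show "(case x of (x, y) \<Rightarrow> (ab x, ab y)) \<in> ?T"
        by (auto simp: QT_def plus_ab in_keys_iff split: if_splits prod.splits)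
    next
      fix x assume "x \<in> ?T"
      then show "(case (case x of (a, b) \<Rightarrow> (rep a, rep b)) of (x, y) \<Rightarrow> (ab x, ab y)) = x"
        by (auto simp: rep_inverse split: prod.splits)
    next
      fix x assume x: "x \<in> ?T"
      then obtain a b where ab: "x = (a, b)" "lookup X (a, b) \<noteq> 0" "a + b = ab w"
        by (cases x) (auto simp: in_keys_iff)
      then have "red (rep a @ rep b) = w" using True
        by (metis ab_inj plus_fg_def red_red)
      then show "(case x of (a, b) \<Rightarrow> (rep a, rep b)) \<in> ?S"
        using ab by (auto simp: QT_def rep_inverse)
    next
      fix x assume "x \<in> ?S"
      then show "lookup X (case x of (x, y) \<Rightarrow> (ab x, ab y)) = QT X x"
        by (auto simp: QT_def split: if_splits prod.splits)
    qed
    also have "\<dots> = Q (mu X) w" using True by (simp add: Q_def lookup_mu)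
    finally show ?thesis .
  qed
qed

lemma addA_bridge: "addA (Q p) (Q q) = Q (p + q)"
  by (rule ext) (simp add: addA_def Q_def lookup_add)

lemma smulA_bridge: "smulA (-1) (Q p) = Q (- p)"
  by (rule ext) (simp add: smulA_def Q_def lookup_uminus)

lemma addT_bridge: "addT (QT X) (QT Y) = QT (X + Y)"
  by (rule ext) (auto simp: addT_def QT_def lookup_add)

lemma smulT_bridge: "smulT (-1) (QT X) = QT (- X)"
  by (rule ext) (auto simp: smulT_def QT_def lookup_uminus)

lemma gen_bridge: "gen w = Q (single (ab (red w)) 1)"
  by (rule ext) (auto simp: gen_def Q_def lookup_single when_def ab_inj)

lemma oneA_bridge: "oneA = Q 1"
  by (simp add: oneA_def gen_bridge zero_fg_def[symmetric] one_poly_mapping_def)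

lemma zeroA_bridge: "zeroA = Q 0"
  by (rule ext) (simp add: zeroA_def Q_def)



lemma pm_induct[case_names zero step]:
  assumes "R 0" and "\<And>k c p. R p \<Longrightarrow> R (single k c + p)"
  shows "R p"
proof (induction p rule: update_induct)
  case const then show ?case using assms(1) .
next
  case (update f a b)
  have "Poly_Mapping.update a b f = single a b + f"
    by (rule poly_mapping_eqI) (use update.hyps(1) in \<open>auto simp: lookup_update lookup_add lookup_single when_def in_keys_iff\<close>)
  then show ?case using assms(2) update.IH by simp
qed

lemma tp_add1: "tp (p + q) r = tp p r + tp q r"
  by (rule poly_mapping_eqI) (simp add: lookup_tp lookup_add algebra_simps)

lemma tp_add2: "tp p (q + r) = tp p q + tp p r"
  by (rule poly_mapping_eqI) (simp add: lookup_tp lookup_add algebra_simps)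

lemma tp_zero1[simp]: "tp 0 r = 0"
  by (rule poly_mapping_eqI) (simp add: lookup_tp)

lemma tp_zero2[simp]: "tp r 0 = 0"
  by (rule poly_mapping_eqI) (simp add: lookup_tp)

lemma tp_single: "tp (single a x) (single b y) = single (a, b) (x * y)"
  by (rule poly_mapping_eqI) (auto simp: lookup_tp lookup_single when_def)

lemma tp_uminus1: "tp (- p) r = - tp p r"
  by (rule poly_mapping_eqI) (simp add: lookup_tp lookup_uminus)

lemma tp_uminus2: "tp p (- r) = - tp p r"
  by (rule poly_mapping_eqI) (simp add: lookup_tp lookup_uminus)

lemma lookup_mu_sup:
  assumes "finite S" "keys X \<subseteq> S"
  shows "lookup (mu X) g = (\<Sum>k\<in>{k\<in>S. fst k + snd k = g}. lookup X k)"
  unfolding lookup_mu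
  by (rule sum.mono_neutral_left) (use assms in \<open>auto simp: in_keys_iff\<close>)

lemma mu_add: "mu (X + Y) = mu X + mu Y"
proof (rule poly_mapping_eqI)
  fix g
  let ?S = "keys X \<union> keys Y \<union> keys (X + Y)"
  have f: "finite ?S" by simp
  have a: "lookup (mu X) g = (\<Sum>k\<in>{k\<in>?S. fst k + snd k = g}. lookup X k)"
    by (rule lookup_mu_sup) auto
  have b: "lookup (mu Y) g = (\<Sum>k\<in>{k\<in>?S. fst k + snd k = g}. lookup Y k)"
    by (rule lookup_mu_sup) auto
  have c: "lookup (mu (X + Y)) g = (\<Sum>k\<in>{k\<in>?S. fst k + snd k = g}. lookup (X + Y) k)"
    by (rule lookup_mu_sup) auto
  show "lookup (mu (X + Y)) g = lookup (mu X + mu Y) g"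
    unfolding lookup_add a b c by (simp add: lookup_add sum.distrib)
qed

lemma mu_zero[simp]: "mu 0 = 0"
  by (rule poly_mapping_eqI) (simp add: lookup_mu)

lemma mu_single: "mu (single k c) = single (fst k + snd k) c"
proof (rule poly_mapping_eqI)
  fix g
  have f: "finite {k}" "keys (single k c) \<subseteq> {k}" by auto
  show "lookup (mu (single k c)) g = lookup (single (fst k + snd k) c) g"
  proof -
    have "{ka \<in> {k}. fst ka + snd ka = g} = (if g = fst k + snd k then {k} else {})" by auto
    then show ?thesis by (subst lookup_mu_sup[OF f]) (auto simp: lookup_single when_def)
  qed
qed

lemma mu_uminus: "mu (- X) = - mu X"
  by (metis add_eq_0_iff mu_add mu_zero neg_eq_iff_add_eq_0)

lemma one_single: "(1 :: 'k::monoid_add \<Rightarrow>\<^sub>0 complex) = single 0 1"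
  by (simp add: one_poly_mapping_def)

lemma tp1_single: "tp 1 (single d y) = single (0, d) y"
  by (simp only: one_single tp_single mult_1)

lemma tp1_single': "tp (single d y) 1 = single (d, 0) y"
  by (simp only: one_single tp_single mult_1_right)

lemma mu_right_single: "mu (single k x * tp 1 c) = single (fst k + snd k) x * c"
proof (induction c rule: pm_induct)
  case zero then show ?case by simp
next
  case (step d y c)
  have "single k x * tp 1 (single d y + c) = single k x * tp 1 (single d y) + single k x * tp 1 c"
    by (simp add: tp_add2 distrib_left)
  moreover have "mu (single k x * tp 1 (single d y)) = single (fst k + snd k) x * single d y"
    by (cases k) (simp add: tp1_single mult_single mu_single add.assoc)
  ultimately show ?case using step by (simp add: mu_add distrib_left)
qed

lemma mu_right: "mu (X * tp 1 c) = mu X * c"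
proof (induction X rule: pm_induct)
  case zero then show ?case by simp
next
  case (step k x X)
  then show ?case by (simp add: distrib_right mu_add mu_right_single mu_single)
qed

lemma mu_left_single: "mu (tp b 1 * single k x) = b * single (fst k + snd k) x"
proof (induction b rule: pm_induct)
  case zero then show ?case by simp
next
  case (step d y b)
  have "tp (single d y + b) 1 * single k x = tp (single d y) 1 * single k x + tp b 1 * single k x"
    by (simp add: tp_add1 distrib_right)
  moreover have "mu (tp (single d y) 1 * single k x) = single d y * single (fst k + snd k) x"
    by (cases k) (simp add: tp1_single' mult_single mu_single add.assoc)
  ultimately show ?case using step by (simp add: mu_add distrib_right)
qed

lemma mu_left: "mu (tp b 1 * X) = b * mu X"
proof (induction X rule: pm_induct)
  case zero then show ?case by simp
next
  case (step k x X)
  then show ?case by (simp add: distrib_left mu_add mu_left_single mu_single)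
qed

lemma mu_tp: "mu (tp a b) = a * b"
proof (induction a rule: pm_induct)
  case zero then show ?case by simp
next
  case (step k x a)
  have "mu (tp (single k x) b) = single k x * b"
  proof (induction b rule: pm_induct)
    case zero then show ?case by simp
  next
    case (step l y b)
    then show ?case by (simp add: tp_add2 mu_add distrib_left tp_single mu_single mult_single)
  qed
  then show ?case using step by (simp add: tp_add1 mu_add distrib_right)
qed

lemma tp_mult_single:
  "tp (single a x) (single b y) * tp (single c z) (single d w) = tp (single a x * single c z) (single b y * single d w)"
  by (simp add: tp_single mult_single mult_ac)

lemma tp_mult: "tp a b * tp c d = tp (a * c) (b * d)"
proof (induction a rule: pm_induct)
  case zero then show ?case by simp
next
  case (step k1 x1 a)
  have "tp (single k1 x1) b * tp c d = tp (single k1 x1 * c) (b * d)"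
  proof (induction b rule: pm_induct)
    case zero then show ?case by simp
  next
    case (step k2 x2 b)
    have "tp (single k1 x1) (single k2 x2) * tp c d = tp (single k1 x1 * c) (single k2 x2 * d)"
    proof (induction c rule: pm_induct)
      case zero then show ?case by simp
    next
      case (step k3 x3 c)
      have "tp (single k1 x1) (single k2 x2) * tp (single k3 x3) d = tp (single k1 x1 * single k3 x3) (single k2 x2 * d)"
      proof (induction d rule: pm_induct)
        case zero then show ?case by simp
      next
        case (step k4 x4 d)
        then show ?case by (simp add: tp_add2 distrib_left tp_mult_single)
      qed
      then show ?case using step by (simp add: tp_add1 distrib_left distrib_right)
    qed
    then show ?case using step by (simp add: tp_add2 tp_add1 distrib_left distrib_right)
  qed
  then show ?case using step by (simp add: tp_add1 distrib_left distrib_right)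
qed



lemma PTQT: "PT (QT X) = X"
  by (rule poly_mapping_eqI) (subst PT_lookup[OF QT_alg], simp add: QT_def rep_inverse split: prod.splits)

lemma QT_inj: "QT X = QT Y \<Longrightarrow> X = Y"
  by (metis PTQT)

definition K' :: "((word \<times> word \<Rightarrow> complex) \<Rightarrow> (word \<times> word \<Rightarrow> complex)) \<Rightarrow>
   (fg \<times> fg \<Rightarrow>\<^sub>0 complex) \<Rightarrow> (fg \<times> fg \<Rightarrow>\<^sub>0 complex)" where
  "K' K X = PT (K (QT X))"

lemma K'_eq: "kontsevich_dbr K \<Longrightarrow> K (QT X) = QT (K' K X)"
  unfolding K'_def by (rule QTPT[symmetric]) (auto simp: kontsevich_dbr_def QT_alg)

lemma K'_add: assumes kd: "kontsevich_dbr K" shows "K' K (X + Y) = K' K X + K' K Y"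
proof (rule QT_inj)
  have "QT (K' K (X + Y)) = K (addT (QT X) (QT Y))" by (simp add: K'_eq[OF kd] addT_bridge)
  also have "\<dots> = addT (K (QT X)) (K (QT Y))" using kd by (simp add: kontsevich_dbr_def QT_alg)
  also have "\<dots> = QT (K' K X + K' K Y)" by (simp add: K'_eq[OF kd] addT_bridge)
  finally show "QT (K' K (X + Y)) = QT (K' K X + K' K Y)" .
qed

lemma K'_zero: assumes kd: "kontsevich_dbr K" shows "K' K 0 = 0"
  using K'_add[OF kd, of 0 0] by simp

lemma K'_uminus: assumes kd: "kontsevich_dbr K" shows "K' K (- X) = - K' K X"
  using K'_add[OF kd, of X "- X"] K'_zero[OF kd] by (metis neg_eq_iff_add_eq_0 add.right_inverse)

lemma K'_right: assumes kd: "kontsevich_dbr K"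
  shows "K' K (tp p (q * r)) = K' K (tp p q) * tp 1 r + tp q 1 * K' K (tp p r)"
proof (rule QT_inj)
  have "QT (K' K (tp p (q * r))) = K (tens (Q p) (mulA (Q q) (Q r)))"
    by (simp add: K'_eq[OF kd] mul_bridge tens_bridge)
  also have "\<dots> = addT (mulT (K (tens (Q p) (Q q))) (tens oneA (Q r)))
                        (mulT (tens (Q q) oneA) (K (tens (Q p) (Q r))))"
    using kd by (simp add: kontsevich_dbr_def Q_alg)
  also have "\<dots> = QT (K' K (tp p q) * tp 1 r + tp q 1 * K' K (tp p r))"
    by (simp add: K'_eq[OF kd] tens_bridge oneA_bridge mulT_bridge addT_bridge)
  finally show "QT (K' K (tp p (q * r))) = QT (K' K (tp p q) * tp 1 r + tp q 1 * K' K (tp p r))" .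
qed

lemma K'_left: assumes kd: "kontsevich_dbr K"
  shows "K' K (tp (p * q) r) = K' K (tp p r) * tp q 1 + tp 1 p * K' K (tp q r)"
proof (rule QT_inj)
  have "QT (K' K (tp (p * q) r)) = K (tens (mulA (Q p) (Q q)) (Q r))"
    by (simp add: K'_eq[OF kd] mul_bridge tens_bridge)
  also have "\<dots> = addT (mulT (K (tens (Q p) (Q r))) (tens (Q q) oneA))
                        (mulT (tens oneA (Q p)) (K (tens (Q q) (Q r))))"
    using kd by (simp add: kontsevich_dbr_def Q_alg)
  also have "\<dots> = QT (K' K (tp p r) * tp q 1 + tp 1 p * K' K (tp q r))"
    by (simp add: K'_eq[OF kd] tens_bridge oneA_bridge mulT_bridge addT_bridge)
  finally show "QT (K' K (tp (p * q) r)) = QT (K' K (tp p r) * tp q 1 + tp 1 p * K' K (tp q r))" .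
qed

lemma tp_one_one: "tp 1 1 = 1"
  by (simp only: one_single tp_single mult_1 zero_prod_def)

lemma K'_left_one: assumes kd: "kontsevich_dbr K" shows "K' K (tp 1 r) = 0"
  using K'_left[OF kd, of 1 1 r] by (simp add: tp_one_one)

definition e :: "word \<Rightarrow> fg \<Rightarrow>\<^sub>0 complex" where
  "e w = single (ab w) 1"

lemma e_mult: "red x = x \<Longrightarrow> red y = y \<Longrightarrow> e x * e y = e (red (x @ y))"
  by (simp add: e_def mult_single plus_ab)

lemma e_nil: "e [] = 1"
  by (simp add: e_def one_single zero_fg_def)

lemma gen_e: "red w = w \<Longrightarrow> gen w = Q (e w)"
  by (simp add: gen_bridge e_def)



abbreviation "lu \<equiv> (False, True)"
abbreviation "lU \<equiv> (False, False)"
abbreviation "lv \<equiv> (True, True)"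
abbreviation "lV \<equiv> (True, False)"

lemmas redc = cr_def inv_letter_def

lemma K_uv: assumes kd: "kontsevich_dbr K" shows "K' K (tp (e [lu]) (e [lv])) = - tp (e [lv, lu]) 1"
proof (rule QT_inj)
  have "QT (K' K (tp (e [lu]) (e [lv]))) = K (tens gu gv)"
    by (simp add: K'_eq[OF kd] tens_bridge gu_def gv_def gen_e redc)
  also have "\<dots> = smulT (-1) (tens (mulA gv gu) oneA)" using kd by (simp add: kontsevich_dbr_def)
  also have "\<dots> = QT (- tp (e [lv, lu]) 1)"
    by (simp add: gu_def gv_def gen_e redc mul_bridge e_mult oneA_bridge tens_bridge smulT_bridge)
  finally show "QT (K' K (tp (e [lu]) (e [lv]))) = QT (- tp (e [lv, lu]) 1)" .
qed

lemma K_vu: assumes kd: "kontsevich_dbr K" shows "K' K (tp (e [lv]) (e [lu])) = tp (e [lu, lv]) 1"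
proof (rule QT_inj)
  have "QT (K' K (tp (e [lv]) (e [lu]))) = K (tens gv gu)"
    by (simp add: K'_eq[OF kd] tens_bridge gu_def gv_def gen_e redc)
  also have "\<dots> = tens (mulA gu gv) oneA" using kd by (simp add: kontsevich_dbr_def)
  also have "\<dots> = QT (tp (e [lu, lv]) 1)"
    by (simp add: gu_def gv_def gen_e redc mul_bridge e_mult oneA_bridge tens_bridge)
  finally show "QT (K' K (tp (e [lv]) (e [lu]))) = QT (tp (e [lu, lv]) 1)" .
qed

lemma K_uu: assumes kd: "kontsevich_dbr K" shows "K' K (tp (e [lu]) (e [lu])) = 0"
proof (rule QT_inj)
  have "QT (K' K (tp (e [lu]) (e [lu]))) = K (tens gu gu)"
    by (simp add: K'_eq[OF kd] tens_bridge gu_def gen_e redc)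
  also have "\<dots> = tens zeroA zeroA" using kd by (simp add: kontsevich_dbr_def)
  also have "\<dots> = QT 0" by (simp add: zeroA_bridge tens_bridge)
  finally show "QT (K' K (tp (e [lu]) (e [lu]))) = QT 0" .
qed

lemma K_vv: assumes kd: "kontsevich_dbr K" shows "K' K (tp (e [lv]) (e [lv])) = 0"
proof (rule QT_inj)
  have "QT (K' K (tp (e [lv]) (e [lv]))) = K (tens gv gv)"
    by (simp add: K'_eq[OF kd] tens_bridge gv_def gen_e redc)
  also have "\<dots> = tens zeroA zeroA" using kd by (simp add: kontsevich_dbr_def)
  also have "\<dots> = QT 0" by (simp add: zeroA_bridge tens_bridge)
  finally show "QT (K' K (tp (e [lv]) (e [lv]))) = QT 0" .
qed

lemma K_inv: assumes kd: "kontsevich_dbr K" and pq: "p * q = 1" and qp: "q * p = 1"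
  shows "K' K (tp q c) = - (tp 1 q * K' K (tp p c) * tp q 1)"
proof -
  have "0 = K' K (tp p c) * tp q 1 + tp 1 p * K' K (tp q c)"
    using K'_left[OF kd, of p q c] pq K'_left_one[OF kd] by simp
  then have "0 = tp 1 q * (K' K (tp p c) * tp q 1 + tp 1 p * K' K (tp q c))" by simp
  also have "\<dots> = tp 1 q * K' K (tp p c) * tp q 1 + K' K (tp q c)"
    by (simp add: distrib_left mult.assoc[symmetric] tp_mult qp tp_one_one)
  finally show ?thesis by (simp add: eq_neg_iff_add_eq_0 add.commute)
qed

definition H :: "fg \<Rightarrow>\<^sub>0 complex" where
  "H = e [lu] + e [lv] + e [lU] + e [lV] + e [lU, lV]"

definition D where "D K p = mu (K' K (tp H p))"

lemma D_mult: assumes kd: "kontsevich_dbr K" shows "D K (q * r) = D K q * r + q * D K r"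
  by (simp add: D_def K'_right[OF kd] mu_add mu_left mu_right)

lemma D_one: assumes kd: "kontsevich_dbr K" shows "D K 1 = 0"
  using D_mult[OF kd, of 1 1] by simp

lemma D_inv: assumes kd: "kontsevich_dbr K" and pq: "p * q = 1" and qp: "q * p = 1"
  shows "D K q = - (q * D K p * q)"
proof -
  have "0 = D K p * q + p * D K q" using D_mult[OF kd, of p q] pq D_one[OF kd] by simp
  then have "0 = q * (D K p * q + p * D K q)" by simp
  also have "\<dots> = q * D K p * q + D K q"
    by (simp add: distrib_left mult.assoc[symmetric] qp)
  finally show ?thesis by (simp add: eq_neg_iff_add_eq_0 add.commute)
qed

lemma hK_H: "hK = Q H"
  by (simp add: hK_def H_def gu_def gv_def gen_e redc addA_bridge)

lemma e_uU: "e [lu] * e [lU] = 1" "e [lU] * e [lu] = 1" "e [lv] * e [lV] = 1" "e [lV] * e [lv] = 1"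
  by (simp_all add: e_mult redc e_nil)

lemma e_UV: "e [lU, lV] = e [lU] * e [lV]"
  by (simp add: e_mult redc)


lemma mu_diff: "mu (X - Y) = mu X - mu Y"
  by (metis diff_conv_add_uminus mu_add mu_uminus)

lemma KU: assumes kd: "kontsevich_dbr K"
  shows "K' K (tp (e [lU]) c) = - (tp 1 (e [lU]) * K' K (tp (e [lu]) c) * tp (e [lU]) 1)"
  by (rule K_inv[OF kd]) (simp_all add: e_uU)

lemma KV: assumes kd: "kontsevich_dbr K"
  shows "K' K (tp (e [lV]) c) = - (tp 1 (e [lV]) * K' K (tp (e [lv]) c) * tp (e [lV]) 1)"
  by (rule K_inv[OF kd]) (simp_all add: e_uU)

lemma KUV: assumes kd: "kontsevich_dbr K"
  shows "K' K (tp (e [lU, lV]) c) = K' K (tp (e [lU]) c) * tp (e [lV]) 1 + tp 1 (e [lU]) * K' K (tp (e [lV]) c)"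
  by (simp add: e_UV K'_left[OF kd])

lemma Du: assumes kd: "kontsevich_dbr K"
  shows "D K (e [lu]) = e [lu, lv] - e [lu, lV] - e [lV]"
  by (simp add: D_def H_def tp_add1 K'_add[OF kd] mu_add KUV[OF kd] KU[OF kd] KV[OF kd]
      K_uu[OF kd] K_vu[OF kd] mu_uminus tp_mult mu_tp e_mult redc distrib_left distrib_right
      K'_uminus[OF kd] tp_uminus1 tp_uminus2 mu_diff)


lemma Dv: assumes kd: "kontsevich_dbr K"
  shows "D K (e [lv]) = - e [lv, lu] + e [lv, lU] + e [lU]"
  by (simp add: D_def H_def tp_add1 K'_add[OF kd] mu_add KUV[OF kd] KU[OF kd] KV[OF kd]
      K_vv[OF kd] K_uv[OF kd] mu_uminus tp_mult mu_tp e_mult redc distrib_left distrib_right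
      K'_uminus[OF kd] tp_uminus1 tp_uminus2 mu_diff)


definition cc :: "fg \<Rightarrow>\<^sub>0 complex" where "cc = e [lv] + e [lU]"

lemma DH: assumes kd: "kontsevich_dbr K" shows "D K H = H * cc - cc * H"
proof -
  have dU: "D K (e [lU]) = - (e [lU] * D K (e [lu]) * e [lU])"
    by (rule D_inv[OF kd]) (simp_all add: e_uU)
  have dV: "D K (e [lV]) = - (e [lV] * D K (e [lv]) * e [lV])"
    by (rule D_inv[OF kd]) (simp_all add: e_uU)
  have dUV: "D K (e [lU, lV]) = D K (e [lU]) * e [lV] + e [lU] * D K (e [lV])"
    by (simp add: e_UV D_mult[OF kd])
  have "D K H = D K (e [lu]) + D K (e [lv]) + D K (e [lU]) + D K (e [lV]) + D K (e [lU, lV])"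
    by (simp add: H_def D_def tp_add2 K'_add[OF kd] mu_add)
  also have "\<dots> = H * cc - cc * H"
    apply (simp add: dUV dU dV Du[OF kd] Dv[OF kd] H_def cc_def e_mult redc
      distrib_left distrib_right algebra_simps)
    done
  finally show ?thesis .
qed


lemma D_pow: assumes kd: "kontsevich_dbr K" shows "D K (H ^ n) = H ^ n * cc - cc * H ^ n"
proof (induction n)
  case 0 then show ?case by (simp add: D_one[OF kd])
next
  case (Suc n)
  have "D K (H ^ Suc n) = D K H * H ^ n + H * D K (H ^ n)" by (simp add: D_mult[OF kd])
  also have "\<dots> = H ^ Suc n * cc - cc * H ^ Suc n"
    by (simp add: Suc DH[OF kd] algebra_simps)
  finally show ?case .
qed

lemma powA_H: "powA hK n = Q (H ^ n)"
  by (induction n) (simp_all add: oneA_bridge hK_H mul_bridge)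

theorem mainTheorem3:
  fixes K :: "(word \<times> word \<Rightarrow> complex) \<Rightarrow> (word \<times> word \<Rightarrow> complex)" and k :: nat
  assumes "kontsevich_dbr K" and "0 < k"
  shows "brK K hK (powA hK k) \<in> commA"
proof -
  have "brK K hK (powA hK k) = Q (D K (H ^ k))"
    unfolding brK_def powA_H unfolding hK_H tens_bridge K'_eq[OF assms(1)] muT_bridge D_def ..
  also have "\<dots> = addA (mulA (Q (H ^ k)) (Q cc)) (smulA (-1) (mulA (Q cc) (Q (H ^ k))))"
    by (simp add: D_pow[OF assms(1)] mul_bridge smulA_bridge addA_bridge)
  finally show ?thesis by (simp add: commA.comm Q_alg)
qed


end
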